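(* Let $\theta_1,\theta_2>0$, $\theta=\theta_1+\theta_2$, $p=\theta_1/\theta$, and let \[ \mathcal{L}g(x)=x\big(g(1)-g(x)\big)+(1-x)\big(g(0)-g(x)\big)+\tfrac12(\theta_1-\theta x)g'(x). \] The eigenvalues of $\mathcal{L}$ (acting on polynomials) are $\lambda_0=0$, $\lambda_1=\theta/2$ and $\lambda_n=1+n\theta/2$ for $n\ge 2$. The corresponding right eigenvectors are monic polynomials $P_n$ with $\mathcal{L}P_n=-\lambda_nP_n$, given by $P_0(x)=1$, $P_1(x)=x-p$, and for $n\ge2$ \[ P_n(x)=(x-p)^n+c_{n1}(x-p)+c_{n0}, \] where \[ c_{n0}=-\frac{2/\theta}{n+2/\theta}\Big[p(1-p)^n+(1-p)(-p)^n\Big],\qquad c_{n1}=\frac{2/\theta}{n-1+2/\theta}\Big[(-p)^n-(1-p)^n\Big]. \]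
   Context: $\mathcal{L}$ is the generator of the two-type star-shaped $\Lambda$-Fleming–Viot process with mutation (whole-population replacement at rate 1, mutation at rate $\theta/2$ along lines with new type 1 with probability $p$). *)

theory Defs
  imports "HOL-Computational_Algebra.Polynomial"
begin

definition gen :: "real \<Rightarrow> real \<Rightarrow> real poly \<Rightarrow> real poly" where
  "gen th1 th2 g =
     [:0, 1:] * ([:poly g 1:] - g)
   + [:1, -1:] * ([:poly g 0:] - g)
   + smult (1/2) ([:th1, -(th1 + th2):] * pderiv g)"

definition lam :: "real \<Rightarrow> nat \<Rightarrow> real" where
  "lam th n = (if n = 0 then 0 else if n = 1 then th / 2 else 1 + real n * th / 2)"

definition c0 :: "real \<Rightarrow> real \<Rightarrow> nat \<Rightarrow> real" where
  "c0 th p n = - ((2/th) / (real n + 2/th)) * (p * (1 - p)^n + (1 - p) * (-p)^n)"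

definition c1 :: "real \<Rightarrow> real \<Rightarrow> nat \<Rightarrow> real" where
  "c1 th p n = ((2/th) / (real n - 1 + 2/th)) * ((-p)^n - (1 - p)^n)"

definition Pn :: "real \<Rightarrow> real \<Rightarrow> nat \<Rightarrow> real poly" where
  "Pn th1 th2 n =
    (let th = th1 + th2; p = th1 / th in
     if n = 0 then 1
     else if n = 1 then [:-p, 1:]
     else [:-p, 1:] ^ n + smult (c1 th p n) [:-p, 1:] + [:c0 th p n:])"

end

theory Submission imports Defs begin
lemma coeff_gen: "coeff (gen th1 th2 g) k =
   (if k=0 then poly g 0 else 0) + (if k=1 then poly g 1 - poly g 0 else 0) - coeff g k
   + th1/2 * real (Suc k) * coeff g (Suc k) - (th1+th2)/2 * real k * coeff g k"
  unfolding gen_def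
  by (cases k) (auto simp: coeff_pderiv algebra_simps mult_pCons_left coeff_pCons field_simps split: nat.split)

lemma coeff_gen_deg:
  assumes "degree g = d"
  shows "coeff (gen th1 th2 g) d = - lam (th1+th2) d * coeff g d"
proof -
  have z: "coeff g (Suc d) = 0" using assms by (simp add: coeff_eq_0)
  show ?thesis
  proof (cases "d = 0")
    case True
    then show ?thesis using z by (simp add: coeff_gen lam_def poly_0_coeff_0)
  next
    case False
    show ?thesis
    proof (cases "d = 1")
      case True
      have "poly g 1 = coeff g 0 + coeff g 1"
        using assms True by (simp add: poly_altdef)
      then show ?thesis using z True by (simp add: coeff_gen lam_def poly_0_coeff_0 field_simps)
    next
      case False2: False
      then show ?thesis using z False by (simp add: coeff_gen lam_def field_simps)
    qed
  qed
qed

lemma lam_ge2: "d \<ge> 2 \<Longrightarrow> th > 0 \<Longrightarrow> lam th d \<ge> 1 + th"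
proof -
  assume h: "d \<ge> 2" "th > 0"
  have "real d * th \<ge> 2 * th" using h by (intro mult_right_mono) auto
  then show ?thesis using h by (simp add: lam_def)
qed

lemma lam01: "lam th 0 = 0" "lam th (Suc 0) = th/2" by (auto simp: lam_def)

lemma lam_inj:
  assumes "th > 0" "lam th d = lam th n" shows "d = n"
proof -
  have "d = 0 \<or> d = 1 \<or> d \<ge> 2" "n = 0 \<or> n = 1 \<or> n \<ge> 2" by auto
  then show ?thesis
  proof (elim disjE)
    assume "d \<ge> 2" "n \<ge> 2"
    then have "1 + real d * th / 2 = 1 + real n * th / 2" using assms by (simp add: lam_def)
    then show ?thesis using assms by simp
  qed (use assms lam_ge2[of d th] lam_ge2[of n th] in \<open>auto simp: lam01\<close>)
qed

lemma gen_alt: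
  assumes "th1 + th2 \<noteq> 0"
  shows "gen th1 th2 g = [:poly g 0, poly g 1 - poly g 0:] - g
     - smult ((th1+th2)/2) ([:-th1/(th1+th2), 1:] * pderiv g)"
  using assms
  by (intro poly_eqI) (auto simp: coeff_gen coeff_pderiv mult_pCons_left coeff_pCons field_simps split: nat.split)

lemma pderiv_q: "pderiv [:a, 1::real:] = 1"
  by (simp add: pderiv_pCons)

lemma lin_aux: "[:a, b:] - (Q + smult C1 [:-p, 1:] + [:C0:]) - smult t (smult r Q + smult C1 [:-p, 1:])
   = smult (-1 - t * r) Q + smult (b - C1 - t * C1) [:-p, 1:] + [:a + b * p - C0 :: real:]"
  by (rule poly_eqI) (simp add: coeff_pCons algebra_simps split: nat.split)

lemma Pn_eigen_ge2:
  assumes "th1 > 0" "th2 > 0" "n \<ge> 2"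
  shows "gen th1 th2 (Pn th1 th2 n) = smult (- lam (th1 + th2) n) (Pn th1 th2 n)"
proof -
  define th where "th = th1 + th2"
  define p where "p = th1 / th"
  define q where "q = [:-p, 1::real:]"
  define C1 where "C1 = c1 th p n"
  define C0 where "C0 = c0 th p n"
  define g where "g = q ^ n + smult C1 q + [:C0:]"
  have thpos: "th > 0" using assms by (simp add: th_def)
  have Pn: "Pn th1 th2 n = g" using assms
    by (simp add: Pn_def Let_def th_def p_def q_def C1_def C0_def g_def)
  define A where "A = (-p)^n"
  define B where "B = (1-p)^n"
  have pq: "\<And>x. poly q x = x - p" by (simp add: q_def)
  define a where "a = poly g 0"
  define b where "b = poly g 1 - poly g 0"
  have a: "a = A - C1 * p + C0" by (simp add: a_def g_def pq A_def)
  have b: "b = B - A + C1" by (simp add: b_def g_def pq A_def B_def algebra_simps)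
  have dg: "pderiv g = smult (real n) (q ^ (n - 1)) + [:C1:]"
    by (simp add: g_def pderiv_add pderiv_smult pderiv_power q_def pderiv_q pderiv_pCons)
  have qn: "q * q ^ (n - 1) = q ^ n" using assms
    by (cases n) auto
  have qd: "q * pderiv g = smult (real n) (q ^ n) + smult C1 q"
    using qn by (simp add: dg algebra_simps)
  have "gen th1 th2 g = [:a, b:] - g - smult (th/2) (q * pderiv g)"
    using gen_alt[of th1 th2 g] thpos by (simp add: a_def b_def th_def q_def p_def)
  also have "\<dots> = smult (-1 - th/2 * real n) (q ^ n) + smult (b - C1 - th/2 * C1) q + [:a + b * p - C0:]"
    unfolding qd unfolding g_def q_def by (rule lin_aux)
  also have "\<dots> = smult (- lam th n) g"
  proof -
    have l: "lam th n = 1 + real n * th / 2" using assms by (simp add: lam_def)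
    have tp: "2/th > 0" using thpos by simp
    have rn: "real n \<ge> 2" using assms by simp
    have d1: "real n - 1 + 2/th \<noteq> 0" using tp rn by linarith
    have d0: "real n + 2/th \<noteq> 0" using tp rn by linarith
    have E1: "b - C1 - th/2 * C1 = - lam th n * C1"
    proof -
      have "C1 * (th * (real n - 1) + 2) = 2 * (A - B)"
        unfolding C1_def c1_def A_def[symmetric] B_def[symmetric] using d1 thpos
        by (simp add: field_simps)
      then show ?thesis unfolding b l by (simp add: algebra_simps)
    qed
    have E2: "a + b * p - C0 = - lam th n * C0"
    proof -
      have "C0 * (th * real n + 2) = - 2 * (p * B + (1 - p) * A)"
        unfolding C0_def c0_def A_def[symmetric] B_def[symmetric] using d0 thpos
        by (simp add: field_simps)
      then show ?thesis unfolding a b l by (simp add: algebra_simps)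
    qed
    have E3: "-1 - th/2 * real n = - lam th n" using l by simp
    show ?thesis unfolding E1 E2 E3
      by (simp add: g_def smult_add_right)
  qed
  finally show ?thesis using Pn th_def by simp
qed

lemma Pn_props:
  assumes "th1 > 0" "th2 > 0"
  shows "degree (Pn th1 th2 n) = n \<and> lead_coeff (Pn th1 th2 n) = 1
     \<and> gen th1 th2 (Pn th1 th2 n) = smult (- lam (th1 + th2) n) (Pn th1 th2 n)"
proof -
  have "n = 0 \<or> n = 1 \<or> n \<ge> 2" by auto
  then show ?thesis
  proof (elim disjE)
    assume n: "n = 0"
    show ?thesis using n by (auto simp: Pn_def lam_def gen_def one_pCons)
  next
    assume n: "n = 1"
    define p where "p = th1 / (th1 + th2)"
    have P1: "Pn th1 th2 n = [:-p, 1:]" using n by (simp add: Pn_def p_def)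
    have "gen th1 th2 [:-p, 1:] = [:-p, 1:] - [:-p, 1:] - smult ((th1+th2)/2) ([:-p, 1:] * 1)"
      using gen_alt[of th1 th2 "[:-p, 1:]"] assms by (simp add: p_def pderiv_pCons)
    then have "gen th1 th2 (Pn th1 th2 n) = smult (- lam (th1 + th2) n) (Pn th1 th2 n)"
      using n P1 by (simp add: lam_def)
    then show ?thesis using n by (simp add: Pn_def)
  next
    assume n: "n \<ge> 2"
    define p where "p = th1 / (th1 + th2)"
    define q where "q = [:-p, 1::real:]"
    define r where "r = smult (c1 (th1+th2) p n) q + [:c0 (th1+th2) p n:]"
    have P: "Pn th1 th2 n = q ^ n + r" using n
      by (simp add: Pn_def Let_def p_def q_def r_def)
    have dq: "degree (q ^ n) = n" by (simp add: q_def degree_power_eq)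
    have dr: "degree r \<le> 1" unfolding r_def q_def
      by (rule degree_add_le) (simp_all add: degree_smult_eq)
    have deg: "degree (Pn th1 th2 n) = n" unfolding P using dq dr n
      by (subst degree_add_eq_left) auto
    have "lead_coeff (q ^ n) = 1" by (simp add: lead_coeff_power q_def)
    then have lc: "coeff (q ^ n) n = 1" using dq by simp
    have "coeff r n = 0" using dr n by (intro coeff_eq_0) auto
    then have "lead_coeff (Pn th1 th2 n) = 1" unfolding deg unfolding P using lc by simp
    then show ?thesis using deg Pn_eigen_ge2[OF assms n] by simp
  qed
qed

lemma eig_lam:
  assumes "g \<noteq> 0" "gen th1 th2 g = smult (- mu) g"
  shows "mu = lam (th1 + th2) (degree g)"
proof -
  have "coeff (gen th1 th2 g) (degree g) = - mu * lead_coeff g" using assms by simp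
  then have "- lam (th1 + th2) (degree g) * lead_coeff g = - mu * lead_coeff g"
    using coeff_gen_deg[of g "degree g" th1 th2] by simp
  then show ?thesis using assms(1) by simp
qed

lemma gen_diff: "gen th1 th2 (f - g) = gen th1 th2 f - gen th1 th2 g"
  by (intro poly_eqI) (simp add: coeff_gen field_simps)

theorem theorem2:
  fixes th1 th2 :: real
  assumes "th1 > 0" and "th2 > 0"
  shows "{mu. \<exists>g. g \<noteq> 0 \<and> gen th1 th2 g = smult (- mu) g} = range (lam (th1 + th2))
       \<and> (\<forall>n. degree (Pn th1 th2 n) = n \<and> lead_coeff (Pn th1 th2 n) = 1
              \<and> gen th1 th2 (Pn th1 th2 n) = smult (- lam (th1 + th2) n) (Pn th1 th2 n)
              \<and> (\<forall>g. gen th1 th2 g = smult (- lam (th1 + th2) n) g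
                      \<longrightarrow> (\<exists>c. g = smult c (Pn th1 th2 n))))"
proof -
  have thpos: "th1 + th2 > 0" using assms by simp
  have S: "{mu. \<exists>g. g \<noteq> 0 \<and> gen th1 th2 g = smult (- mu) g} = range (lam (th1 + th2))"
  proof (intro equalityI subsetI)
    fix mu assume "mu \<in> {mu. \<exists>g. g \<noteq> 0 \<and> gen th1 th2 g = smult (- mu) g}"
    then obtain g where "g \<noteq> 0" "gen th1 th2 g = smult (- mu) g" by auto
    then show "mu \<in> range (lam (th1 + th2))" using eig_lam by blast
  next
    fix mu assume "mu \<in> range (lam (th1 + th2))"
    then obtain n where mu: "mu = lam (th1 + th2) n" by auto
    have "Pn th1 th2 n \<noteq> 0" using Pn_props[OF assms, of n] by auto
    then show "mu \<in> {mu. \<exists>g. g \<noteq> 0 \<and> gen th1 th2 g = smult (- mu) g}"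
      using Pn_props[OF assms, of n] mu by blast
  qed
  have U: "\<exists>c. g = smult c (Pn th1 th2 n)" if h: "gen th1 th2 g = smult (- lam (th1 + th2) n) g" for n g
  proof -
    define P where "P = Pn th1 th2 n"
    have PP: "degree P = n" "lead_coeff P = 1" "gen th1 th2 P = smult (- lam (th1 + th2) n) P"
      using Pn_props[OF assms, of n] by (auto simp: P_def)
    define hh where "hh = g - smult (coeff g n) P"
    have gh: "gen th1 th2 hh = smult (- lam (th1 + th2) n) hh"
    proof -
      have "gen th1 th2 (smult (coeff g n) P) = smult (coeff g n) (gen th1 th2 P)"
        by (intro poly_eqI) (simp add: coeff_gen field_simps)
      then show ?thesis unfolding hh_def gen_diff using h PP(3) by (simp add: smult_diff_right mult.commute)
    qed
    have cn: "coeff hh n = 0" using PP by (simp add: hh_def)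
    have "hh = 0"
    proof (rule ccontr)
      assume "hh \<noteq> 0"
      then have "lam (th1 + th2) n = lam (th1 + th2) (degree hh)" using eig_lam gh by blast
      then have "degree hh = n" using lam_inj[OF thpos] by metis
      then show False using cn \<open>hh \<noteq> 0\<close> by (metis leading_coeff_0_iff)
    qed
    then show ?thesis unfolding hh_def P_def by auto
  qed
  show ?thesis using S U Pn_props[OF assms] by blast
qed

end
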